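(* Let $S$ be a simple $(l,r)$-framed algebra, $\lambda^1,\lambda^2\in\mathrm{IS}^{(l,r)}$, $a_1\in S_{\lambda^1}$, $a_2\in S_{\lambda^2}$. If $a_1\cdot a_2=0$, then $a_1=0$ or $a_2=0$.
   Context: Let $\mathrm{IS}=\{0,\frac12,\frac1{16}\}$ with fusion rule $\star$ (values are subsets): $0\star h=h\star0=\{h\}$, $\frac12\star\frac12=\{0\}$, $\frac12\star\frac1{16}=\frac1{16}\star\frac12=\{\frac1{16}\}$, $\frac1{16}\star\frac1{16}=\{0,\frac12\}$; $A(h_0,h_1,h_2,h_3)=\{h: h\in h_2\star h_3,\ h_0\in h_1\star h\}$. For $h\in A(h_0,h_1,h_2,h_3)$, $h'\in A(h_0,h_2,h_1,h_3)$ define $B^{h,h'}_{h_0,h_1,h_2,h_3}$: $B_{*,0,*,*}=B_{*,*,0,*}=1$; $B_{*,\frac12,\frac12,*}=-1$; $B_{a,\frac12,\frac1{16},a'}=B_{a,\frac1{16},\frac12,a'}=i$ if $a$ or $a'$ is $\frac12$, else $-i$; $B^{b,b'}_{a,\frac1{16},\frac1{16},a'}=e^{-\pi i/8}\cdot\{1$ if $a,a'\ne\frac1{16},a=a'$; $i$ if $a,a'\neq\frac1{16},a\ne a'$; $\frac{1+i}2$ if $a=a'=\frac1{16},b=b'$; $\frac{1-i}2$ if $a=a'=\frac1{16},b\neq b'\}$. $\mathrm{IS}^{(l,r)}=\mathrm{IS}^l\times\mathrm{IS}^r$, $\lambda=(h_1,..,h_l,\bar h_1,..,\bar h_r)$,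 $s(\lambda)=\sum h_i-\sum\bar h_j$; $\star$, $A$ componentwise; $B^{\lambda,\lambda'}_{\lambda^0,\dots,\lambda^3}=\prod_{i\le l}B^{h_i,h'_i}_{h^0_i,\dots,h^3_i}\prod_{j\le r}\overline{B^{\bar h_j,\bar h'_j}_{\bar h^0_j,\dots,\bar h^3_j}}$. An $(l,r)$-framed algebra: finite-dimensional $\mathrm{IS}^{(l,r)}$-graded $S=\bigoplus S_\lambda$ over $\mathbb{C}$ with bilinear product, nonzero $1\in S_0$, $a\cdot_\lambda b$ the $S_\lambda$-component of $a\cdot b$, satisfying (FA1) $S_\lambda=0$ unless $s(\lambda)\in\mathbb{Z}$; (FA2) $S_0=\mathbb{C}1$, $1$ a two-sided unit; (FA3) $S_{\lambda^1}\cdot S_{\lambda^2}\subset\bigoplus_{\lambda\in\lambda^1\star\lambda^2}S_\lambda$; (FA4) $a_2\cdot_{\lambda^0}(a_1\cdot_{\lambda'}a_3)=\sum_{\lambda\in A(\lambda^0,\lambda^1,\lambda^2,\lambda^3)}B^{\lambda,\lambda'}_{\lambda^0,\lambda^1,\lambda^2,\lambda^3}a_1\cdot_{\lambda^0}(a_2\cdot_\lambda a_3)$ for $a_i\in S_{\lambda^i}$, $\lambda'\in A(\lambda^0,\lambda^2,\lambda^1,\lambda^3)$. An ideal is a graded subspace $M$ with $S\cdot M\subset M$; $S$ is simple if its only ideals are $0$ and $S$. *)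

theory Defs
  imports Complex_Main
begin

datatype IS = I0 | Ihalf | I16

fun hval :: "IS \<Rightarrow> rat" where
  "hval I0 = 0"
| "hval Ihalf = 1/2"
| "hval I16 = 1/16"

fun fus :: "IS \<Rightarrow> IS \<Rightarrow> IS set" where
  "fus I0 h = {h}"
| "fus h I0 = {h}"
| "fus Ihalf Ihalf = {I0}"
| "fus Ihalf I16 = {I16}"
| "fus I16 Ihalf = {I16}"
| "fus I16 I16 = {I0, Ihalf}"

definition Aset :: "IS \<Rightarrow> IS \<Rightarrow> IS \<Rightarrow> IS \<Rightarrow> IS set" where
  "Aset h0 h1 h2 h3 = {h. h \<in> fus h2 h3 \<and> h0 \<in> fus h1 h}"

text \<open>Bc h h' h0 h1 h2 h3 is B^{h,h'}_{h0,h1,h2,h3}. Cases not covered by the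
  paper's definition are set to 0 (they never occur with h in A(h0,h1,h2,h3)
  and h' in A(h0,h2,h1,h3)).\<close>
definition Bc :: "IS \<Rightarrow> IS \<Rightarrow> IS \<Rightarrow> IS \<Rightarrow> IS \<Rightarrow> IS \<Rightarrow> complex" where
  "Bc b b' a h1 h2 a' =
    (if h1 = I0 \<or> h2 = I0 then 1
     else if h1 = Ihalf \<and> h2 = Ihalf then -1
     else if (h1 = Ihalf \<and> h2 = I16) \<or> (h1 = I16 \<and> h2 = Ihalf) then
       (if a = Ihalf \<or> a' = Ihalf then \<i> else - \<i>)
     else \<comment> \<open>h1 = h2 = 1/16\<close>
       exp (- (of_real pi / 8) * \<i>) *
       (if a \<noteq> I16 \<and> a' \<noteq> I16 \<and> a = a' then 1
        else if a \<noteq> I16 \<and> a' \<noteq> I16 \<and> a \<noteq> a' then \<i>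
        else if a = I16 \<and> a' = I16 \<and> b = b' then (1 + \<i>) / 2
        else if a = I16 \<and> a' = I16 \<and> b \<noteq> b' then (1 - \<i>) / 2
        else 0))"

text \<open>An element of IS^(l,r) is a pair (holomorphic part, antiholomorphic part)
  of lists of lengths l and r.\<close>
type_synonym idx = "IS list \<times> IS list"

definition Idx :: "nat \<Rightarrow> nat \<Rightarrow> idx set" where
  "Idx l r = {L. length (fst L) = l \<and> length (snd L) = r}"

definition zidx :: "nat \<Rightarrow> nat \<Rightarrow> idx" where
  "zidx l r = (replicate l I0, replicate r I0)"

definition sval :: "idx \<Rightarrow> rat" where
  "sval L = sum_list (map hval (fst L)) - sum_list (map hval (snd L))"

definition fusList :: "IS list \<Rightarrow> IS list \<Rightarrow> IS list set" where
  "fusList xs ys = {zs. length xs = length ys \<and> length zs = length xs \<and>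
      (\<forall>i<length xs. zs ! i \<in> fus (xs ! i) (ys ! i))}"

definition fusI :: "idx \<Rightarrow> idx \<Rightarrow> idx set" where
  "fusI L \<mu> = fusList (fst L) (fst \<mu>) \<times> fusList (snd L) (snd \<mu>)"

definition AList :: "IS list \<Rightarrow> IS list \<Rightarrow> IS list \<Rightarrow> IS list \<Rightarrow> IS list set" where
  "AList x0 x1 x2 x3 = {zs. length x1 = length x0 \<and> length x2 = length x0 \<and>
      length x3 = length x0 \<and> length zs = length x0 \<and>
      (\<forall>i<length x0. zs ! i \<in> Aset (x0 ! i) (x1 ! i) (x2 ! i) (x3 ! i))}"

definition AI :: "idx \<Rightarrow> idx \<Rightarrow> idx \<Rightarrow> idx \<Rightarrow> idx set" where
  "AI l0 l1 l2 l3 = AList (fst l0) (fst l1) (fst l2) (fst l3) \<times>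
                    AList (snd l0) (snd l1) (snd l2) (snd l3)"

definition BI :: "idx \<Rightarrow> idx \<Rightarrow> idx \<Rightarrow> idx \<Rightarrow> idx \<Rightarrow> idx \<Rightarrow> complex" where
  "BI m m' l0 l1 l2 l3 =
     (\<Prod>i<length (fst l0). Bc (fst m ! i) (fst m' ! i) (fst l0 ! i) (fst l1 ! i)
                                (fst l2 ! i) (fst l3 ! i)) *
     (\<Prod>j<length (snd l0). cnj (Bc (snd m ! j) (snd m' ! j) (snd l0 ! j) (snd l1 ! j)
                                (snd l2 ! j) (snd l3 ! j)))"

text \<open>The algebra is the whole carrier type 'a, a complex vector space with
  scalar multiplication sc. The grading S = (+) S_L is encoded by the
  family of projections pr L onto the homogeneous components:
  S_L = range (pr L), and a \<cdot>_L b = pr L (mul a b).\<close>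

definition graded_space ::
  "(complex \<Rightarrow> 'a::ab_group_add \<Rightarrow> 'a) \<Rightarrow> nat \<Rightarrow> nat \<Rightarrow> (idx \<Rightarrow> 'a \<Rightarrow> 'a) \<Rightarrow> bool" where
  "graded_space sc l r pr \<longleftrightarrow>
     Vector_Spaces.vector_space sc \<and>
     (\<exists>B. finite B \<and> module.span sc B = UNIV) \<and>
     (\<forall>L. Vector_Spaces.linear sc sc (pr L)) \<and>
     (\<forall>L \<mu> x. pr L (pr \<mu> x) = (if L = \<mu> then pr L x else 0)) \<and>
     (\<forall>L x. L \<notin> Idx l r \<longrightarrow> pr L x = 0) \<and>
     (\<forall>x. x = (\<Sum>L\<in>Idx l r. pr L x))"

definition homog :: "(idx \<Rightarrow> 'a \<Rightarrow> 'a) \<Rightarrow> idx \<Rightarrow> 'a \<Rightarrow> bool" where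
  "homog pr L a \<longleftrightarrow> pr L a = a"

definition framed_algebra ::
  "nat \<Rightarrow> nat \<Rightarrow> (complex \<Rightarrow> 'a::ab_group_add \<Rightarrow> 'a) \<Rightarrow> (idx \<Rightarrow> 'a \<Rightarrow> 'a)
     \<Rightarrow> ('a \<Rightarrow> 'a \<Rightarrow> 'a) \<Rightarrow> 'a \<Rightarrow> bool" where
  "framed_algebra l r sc pr mul one \<longleftrightarrow>
     graded_space sc l r pr \<and>
     \<comment> \<open>bilinear product\<close>
     (\<forall>a. Vector_Spaces.linear sc sc (mul a)) \<and>
     (\<forall>b. Vector_Spaces.linear sc sc (\<lambda>a. mul a b)) \<and>
     \<comment> \<open>nonzero unit in S_0\<close>
     one \<noteq> 0 \<and> homog pr (zidx l r) one \<and>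
     \<comment> \<open>(FA1)\<close>
     (\<forall>L x. sval L \<notin> \<int> \<longrightarrow> pr L x = 0) \<and>
     \<comment> \<open>(FA2)\<close>
     (\<forall>x. homog pr (zidx l r) x \<longrightarrow> (\<exists>c. x = sc c one)) \<and>
     (\<forall>x. mul one x = x \<and> mul x one = x) \<and>
     \<comment> \<open>(FA3)\<close>
     (\<forall>L1 L2 a b L. homog pr L1 a \<longrightarrow> homog pr L2 b \<longrightarrow> L \<notin> fusI L1 L2 \<longrightarrow>
        pr L (mul a b) = 0) \<and>
     \<comment> \<open>(FA4)\<close>
     (\<forall>L0 L1 L2 L3 a1 a2 a3 L'.
        L0 \<in> Idx l r \<longrightarrow> L1 \<in> Idx l r \<longrightarrow> L2 \<in> Idx l r \<longrightarrow> L3 \<in> Idx l r \<longrightarrow>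
        homog pr L1 a1 \<longrightarrow> homog pr L2 a2 \<longrightarrow> homog pr L3 a3 \<longrightarrow>
        L' \<in> AI L0 L2 L1 L3 \<longrightarrow>
        pr L0 (mul a2 (pr L' (mul a1 a3))) =
          (\<Sum>L\<in>AI L0 L1 L2 L3.
              sc (BI L L' L0 L1 L2 L3) (pr L0 (mul a1 (pr L (mul a2 a3))))))"

definition fa_ideal ::
  "(complex \<Rightarrow> 'a::ab_group_add \<Rightarrow> 'a) \<Rightarrow> (idx \<Rightarrow> 'a \<Rightarrow> 'a) \<Rightarrow> ('a \<Rightarrow> 'a \<Rightarrow> 'a)
     \<Rightarrow> 'a set \<Rightarrow> bool" where
  "fa_ideal sc pr mul M \<longleftrightarrow>
     module.subspace sc M \<and>
     (\<forall>x\<in>M. \<forall>L. pr L x \<in> M) \<and>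
     (\<forall>a. \<forall>x\<in>M. mul a x \<in> M)"

definition simple_framed_algebra ::
  "nat \<Rightarrow> nat \<Rightarrow> (complex \<Rightarrow> 'a::ab_group_add \<Rightarrow> 'a) \<Rightarrow> (idx \<Rightarrow> 'a \<Rightarrow> 'a)
     \<Rightarrow> ('a \<Rightarrow> 'a \<Rightarrow> 'a) \<Rightarrow> 'a \<Rightarrow> bool" where
  "simple_framed_algebra l r sc pr mul one \<longleftrightarrow>
     framed_algebra l r sc pr mul one \<and>
     (\<forall>M. fa_ideal sc pr mul M \<longrightarrow> M = {0} \<or> M = UNIV)"

end

theory Submission
  imports Defs
begin

lemma lin_mh: "Vector_Spaces.linear s s f \<Longrightarrow> module_hom s s f"
  by (simp only: linear_iff_module_hom)

lemma lin_zero: "Vector_Spaces.linear s s f \<Longrightarrow> f 0 = 0"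
  by (rule module_hom.zero[OF lin_mh])

lemma lin_add: "Vector_Spaces.linear s s f \<Longrightarrow> f (x + y) = f x + f y"
  by (rule module_hom.add[OF lin_mh])

lemma lin_scale: "Vector_Spaces.linear s s f \<Longrightarrow> f (s c x) = s c (f x)"
  by (rule module_hom.scale[OF lin_mh])

lemma lin_sum: "Vector_Spaces.linear s s f \<Longrightarrow> f (sum g A) = (\<Sum>a\<in>A. f (g a))"
  by (rule module_hom.sum[OF lin_mh])

lemma vs_scale0: "Vector_Spaces.vector_space s \<Longrightarrow> s c 0 = 0"
  by (rule module.scale_zero_right, simp only: module_iff_vector_space)

lemma AList_mem:
  assumes "length a1 = length a0" "length m = length a0" "length n = length a0"
    and "zs \<in> fusList m n" and "a0 \<in> fusList a1 zs"
  shows "zs \<in> AList a0 a1 m n"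
proof -
  have z1: "length zs = length m"
    using assms(4) unfolding fusList_def mem_Collect_eq by (elim conjE)
  have z2: "\<forall>i<length m. zs ! i \<in> fus (m ! i) (n ! i)"
    using assms(4) unfolding fusList_def mem_Collect_eq by (elim conjE)
  have z3: "\<forall>i<length a1. a0 ! i \<in> fus (a1 ! i) (zs ! i)"
    using assms(5) unfolding fusList_def mem_Collect_eq by (elim conjE)
  have "\<forall>i<length a0. zs ! i \<in> Aset (a0 ! i) (a1 ! i) (m ! i) (n ! i)"
  proof (intro allI impI)
    fix i assume "i < length a0"
    then have "i < length m" "i < length a1" using assms(1,2) by simp_all
    then show "zs ! i \<in> Aset (a0 ! i) (a1 ! i) (m ! i) (n ! i)"
      unfolding Aset_def mem_Collect_eq using z2 z3 by blast
  qed
  then show ?thesis unfolding AList_def mem_Collect_eq using assms(1,2,3) z1 by simp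
qed

lemma AI_mem:
  assumes "L0 \<in> Idx l r" "L1 \<in> Idx l r" "M \<in> Idx l r" "N \<in> Idx l r"
    and "L \<in> fusI M N" and "L0 \<in> fusI L1 L"
  shows "L \<in> AI L0 L1 M N"
proof -
  have f1: "fst L \<in> fusList (fst M) (fst N)" and s1: "snd L \<in> fusList (snd M) (snd N)"
    using assms(5) unfolding fusI_def by (simp_all only: mem_Times_iff)
  have f2: "fst L0 \<in> fusList (fst L1) (fst L)" and s2: "snd L0 \<in> fusList (snd L1) (snd L)"
    using assms(6) unfolding fusI_def by (simp_all only: mem_Times_iff)
  have l: "length (fst L1) = length (fst L0)" "length (fst M) = length (fst L0)"
     "length (fst N) = length (fst L0)" "length (snd L1) = length (snd L0)"
     "length (snd M) = length (snd L0)" "length (snd N) = length (snd L0)"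
    using assms(1-4) unfolding Idx_def mem_Collect_eq by simp_all
  show ?thesis unfolding AI_def mem_Times_iff
    using AList_mem[OF l(1-3) f1 f2] AList_mem[OF l(4-6) s1 s2] by (rule conjI)
qed

theorem mainTheorem4:
  fixes sc :: "complex \<Rightarrow> 'a::ab_group_add \<Rightarrow> 'a"
    and pr :: "idx \<Rightarrow> 'a \<Rightarrow> 'a"
    and mul :: "'a \<Rightarrow> 'a \<Rightarrow> 'a"
    and one a1 a2 :: 'a
    and l r :: nat
    and L1 L2 :: idx
  assumes "simple_framed_algebra l r sc pr mul one"
    and "L1 \<in> Idx l r" and "L2 \<in> Idx l r"
    and "homog pr L1 a1" and "homog pr L2 a2"
    and "mul a1 a2 = 0"
  shows "a1 = 0 \<or> a2 = 0"
proof -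
  note A = assms(1)[unfolded simple_framed_algebra_def framed_algebra_def graded_space_def]
  note c1 = conjunct1 and c2 = conjunct2
  note FA = A[THEN c1]
  note G = FA[THEN c1]
  note R = FA[THEN c2]
  have vs: "Vector_Spaces.vector_space sc" using G[THEN c1] .
  note lpr = G[THEN c2, THEN c2, THEN c1, rule_format]
  note prpr = G[THEN c2, THEN c2, THEN c2, THEN c1, rule_format]
  note prout = G[THEN c2, THEN c2, THEN c2, THEN c2, THEN c1, rule_format]
  note dec = G[THEN c2, THEN c2, THEN c2, THEN c2, THEN c2, rule_format]
  note lmul = R[THEN c1, rule_format]
  note lmul2 = R[THEN c2, THEN c1, rule_format]
  note onez = R[THEN c2, THEN c2, THEN c2, THEN c1]
  note unit = R[THEN c2, THEN c2, THEN c2, THEN c2, THEN c2, THEN c2, THEN c1, rule_format]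
  note fa3 = R[THEN c2, THEN c2, THEN c2, THEN c2, THEN c2, THEN c2, THEN c2, THEN c1, rule_format]
  note fa4 = R[THEN c2, THEN c2, THEN c2, THEN c2, THEN c2, THEN c2, THEN c2, THEN c2, rule_format]
  note simp_ = A[THEN c2, rule_format]
  have pr0: "\<And>L. pr L 0 = 0" using lin_zero[OF lpr] .
  have mul0: "\<And>a. mul a 0 = 0" using lin_zero[OF lmul] .
  have hom_pr: "\<And>L x. homog pr L (pr L x)" unfolding homog_def using prpr by simp
  define M where "M = {x. \<forall>L L0. pr L0 (mul a1 (pr L x)) = 0}"
  have Mann: "mul a1 y = 0" if "y \<in> M" "homog pr \<nu> y" for y \<nu>
  proof -
    have "mul a1 y = (\<Sum>L0\<in>Idx l r. pr L0 (mul a1 (pr \<nu> y)))"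
    proof -
      have e: "pr \<nu> y = y" using that(2) unfolding homog_def .
      show ?thesis unfolding e by (rule dec)
    qed
    also have "\<dots> = 0"
    proof (intro sum.neutral ballI)
      fix L0 show "pr L0 (mul a1 (pr \<nu> y)) = 0" using that(1) unfolding M_def by blast
    qed
    finally show ?thesis .
  qed
  have key: "pr L0 (mul a1 (pr L (mul b y))) = 0"
    if "\<mu> \<in> Idx l r" "\<nu> \<in> Idx l r" "homog pr \<mu> b" "homog pr \<nu> y" "mul a1 y = 0" for L0 L b y \<mu> \<nu>
  proof (cases "L0 \<in> Idx l r \<and> L \<in> Idx l r \<and> L \<in> fusI \<mu> \<nu> \<and> L0 \<in> fusI L1 L")
    case True
    have i1: "L0 \<in> Idx l r" using True by (rule conjunct1)
    have i2: "L \<in> fusI \<mu> \<nu>" using True by (elim conjE)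
    have i3: "L0 \<in> fusI L1 L" using True by (elim conjE)
    have LA: "L \<in> AI L0 L1 \<mu> \<nu>" by (rule AI_mem[OF i1 assms(2) that(1) that(2) i2 i3])
    have "pr L0 (mul a1 (pr L (mul b y))) =
          (\<Sum>L'\<in>AI L0 \<mu> L1 \<nu>. sc (BI L' L L0 \<mu> L1 \<nu>) (pr L0 (mul b (pr L' (mul a1 y)))))"
      by (rule fa4[OF i1 that(1) assms(2) that(2) that(3) assms(4) that(4) LA])
    also have "\<dots> = 0"
      by (rule sum.neutral, rule ballI, simp only: that(5) pr0 mul0 vs_scale0[OF vs])
    finally show ?thesis .
  next
    case False
    then consider "L0 \<notin> Idx l r" | "L \<notin> Idx l r" | "L \<notin> fusI \<mu> \<nu>" | "L0 \<notin> fusI L1 L"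
      by blast
    then show ?thesis
    proof cases
      case 1 then show ?thesis by (rule prout)
    next
      case 2 then have "pr L (mul b y) = 0" by (rule prout)
      then show ?thesis by (simp only: mul0 pr0)
    next
      case 3 then have "pr L (mul b y) = 0" by (rule fa3[OF that(3,4)])
      then show ?thesis by (simp only: mul0 pr0)
    next
      case 4 then show ?thesis by (rule fa3[OF assms(4) hom_pr])
    qed
  qed
  have prM: "pr \<mu> x \<in> M" if xM: "x \<in> M" for x \<mu>
  proof -
    have h: "\<And>L L0. pr L0 (mul a1 (pr L x)) = 0" using xM unfolding M_def by blast
    have "pr L0 (mul a1 (pr L (pr \<mu> x))) = 0" for L L0
      by (cases "L = \<mu>") (simp_all add: prpr pr0 mul0 h)
    then show ?thesis unfolding M_def by blast
  qed
  have ideal: "fa_ideal sc pr mul M"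
    unfolding fa_ideal_def
  proof (intro conjI ballI allI)
    have m: "module sc" using vs module_iff_vector_space by blast
    have z: "0 \<in> M" unfolding M_def by (simp only: mem_Collect_eq pr0 mul0 simp_thms)
    have ad: "x + y \<in> M" if "x \<in> M" "y \<in> M" for x y
    proof -
      have "pr L0 (mul a1 (pr L (x + y))) = 0" for L L0
      proof -
        have "pr L0 (mul a1 (pr L (x + y))) = pr L0 (mul a1 (pr L x)) + pr L0 (mul a1 (pr L y))"
          by (simp only: lin_add[OF lpr] lin_add[OF lmul])
        also have "\<dots> = 0"
        proof -
          have hx: "pr L0 (mul a1 (pr L x)) = 0" using that(1) unfolding M_def by blast
          have hy: "pr L0 (mul a1 (pr L y)) = 0" using that(2) unfolding M_def by blast
          show ?thesis by (simp only: hx hy add_0_left)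
        qed
        finally show ?thesis .
      qed
      then show ?thesis unfolding M_def by blast
    qed
    have scm: "sc c x \<in> M" if "x \<in> M" for x c
    proof -
      have "pr L0 (mul a1 (pr L (sc c x))) = 0" for L L0
      proof -
        have "pr L0 (mul a1 (pr L (sc c x))) = sc c (pr L0 (mul a1 (pr L x)))"
          by (simp only: lin_scale[OF lpr] lin_scale[OF lmul])
        also have "\<dots> = 0"
        proof -
          have hx: "pr L0 (mul a1 (pr L x)) = 0" using that(1) unfolding M_def by blast
          show ?thesis by (simp only: hx vs_scale0[OF vs])
        qed
        finally show ?thesis .
      qed
      then show ?thesis unfolding M_def by blast
    qed
    show "module.subspace sc M"
      unfolding module.subspace_def[OF m] by (intro conjI ballI allI z ad scm)
  next
    fix x \<mu> assume "x \<in> M"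
    then show "pr \<mu> x \<in> M" by (rule prM)
  next
    fix a x assume xM: "x \<in> M"
    have "mul a x = (\<Sum>\<mu>\<in>Idx l r. \<Sum>\<nu>\<in>Idx l r. mul (pr \<mu> a) (pr \<nu> x))"
    proof -
      have "mul a x = mul (\<Sum>\<mu>\<in>Idx l r. pr \<mu> a) x" by (rule arg_cong[where f="\<lambda>z. mul z x"], rule dec)
      also have "\<dots> = (\<Sum>\<mu>\<in>Idx l r. mul (pr \<mu> a) x)"
        using lin_sum[OF lmul2[of x], of "\<lambda>\<mu>. pr \<mu> a" "Idx l r"] by (simp only:)
      also have "\<dots> = (\<Sum>\<mu>\<in>Idx l r. mul (pr \<mu> a) (\<Sum>\<nu>\<in>Idx l r. pr \<nu> x))"
        by (rule sum.cong[OF refl], rule arg_cong[where f="mul (pr _ a)"], rule dec)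
      also have "\<dots> = (\<Sum>\<mu>\<in>Idx l r. \<Sum>\<nu>\<in>Idx l r. mul (pr \<mu> a) (pr \<nu> x))"
        by (rule sum.cong[OF refl], rule lin_sum[OF lmul])
      finally show ?thesis .
    qed
    moreover have "pr L0 (mul a1 (pr L (\<Sum>\<mu>\<in>Idx l r. \<Sum>\<nu>\<in>Idx l r. mul (pr \<mu> a) (pr \<nu> x)))) = 0"
      for L L0
    proof -
      have "pr L0 (mul a1 (pr L (\<Sum>\<mu>\<in>Idx l r. \<Sum>\<nu>\<in>Idx l r. mul (pr \<mu> a) (pr \<nu> x))))
        = (\<Sum>\<mu>\<in>Idx l r. \<Sum>\<nu>\<in>Idx l r. pr L0 (mul a1 (pr L (mul (pr \<mu> a) (pr \<nu> x)))))"
        by (simp only: lin_sum[OF lpr] lin_sum[OF lmul])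
      also have "\<dots> = 0"
      proof (intro sum.neutral ballI)
        fix \<mu> \<nu>
        assume i1: "\<mu> \<in> Idx l r" and i2: "\<nu> \<in> Idx l r"
        have pM: "pr \<nu> x \<in> M" using xM by (rule prM)
        have hy: "mul a1 (pr \<nu> x) = 0" by (rule Mann[OF pM hom_pr])
        show "pr L0 (mul a1 (pr L (mul (pr \<mu> a) (pr \<nu> x)))) = 0"
          by (rule key[OF i1 i2 hom_pr hom_pr hy])
      qed
      finally show ?thesis .
    qed
    ultimately have "\<forall>L L0. pr L0 (mul a1 (pr L (mul a x))) = 0" by (simp only:) blast
    then show "mul a x \<in> M" unfolding M_def by (rule CollectI)
  qed
  have a2M: "a2 \<in> M"
  proof -
    have h2: "pr L a2 = (if L = L2 then a2 else 0)" for L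
    proof (cases "L = L2")
      case True then show ?thesis using assms(5) unfolding homog_def by simp
    next
      case False
      have "pr L (pr L2 a2) = 0" using prpr[of L L2 a2] False by simp
      then show ?thesis using False assms(5) unfolding homog_def by simp
    qed
    have "pr L0 (mul a1 (pr L a2)) = 0" for L L0
      using h2[of L] assms(6) pr0 mul0 by (cases "L = L2") simp_all
    then show ?thesis unfolding M_def by blast
  qed
  from simp_[OF ideal] show ?thesis
  proof
    assume "M = {0}" then show ?thesis using a2M by simp
  next
    assume "M = UNIV"
    then have "pr L1 (mul a1 (pr (zidx l r) one)) = 0" unfolding M_def by blast
    moreover have "pr (zidx l r) one = one" using onez unfolding homog_def .
    moreover have "mul a1 one = a1" using unit[of a1] by (rule conjunct2)
    moreover have "pr L1 a1 = a1" using assms(4) unfolding homog_def .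
    ultimately have "a1 = 0" by (simp only:)
    then show ?thesis by (rule disjI1)
  qed
qed

end
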